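(* Let $G$ be a finite digraph with blocks $B_1,\dots,B_k$, and suppose $G$ has exactly $t$ cut-vertices $v^c_1,\dots,v^c_t$, with cut-indices $T(1),T(2),\dots,T(t)$ respectively. Then the number of $\mathcal{B}$-partitions of $G$ is $$\prod_{i=1}^{t} T(i).$$
   Context: A digraph $G=(V(G),E(G))$ consists of a finite vertex set $V(G)$ and an edge set $E(G)\subseteq V(G)\times V(G)$ (loops $(u,u)$ are allowed). A subdigraph $H$ of $G$ has $V(H)\subseteq V(G)$ and $E(H)\subseteq E(G)$; it is induced if whenever $u,v\in V(H)$ and $(u,v)\in E(G)$ then $(u,v)\in E(H)$. A digraph with empty vertex set is called a null graph. A path between $v_1$ and $v_k$ is a sequence of distinct vertices $v_1,\dots,v_k$ such that for each $i$, $(v_i,v_{i+1})\in E(G)$ or $(v_{i+1},v_i)\in E(G)$; $G$ is connected if any two distinct vertices are joined by a path, and a component is a maximal connected subdigraph. A cut-vertex of $G$ is a vertex whose removal increases the number of components. A block of $G$ is a maximal connected subdigraph of $G$ that has no cut-vertex (of itself). The cut-index of a cut-vertex $v$ of $G$ is the number of blocks of $G$ containing $v$. If $G$ has blocks $B_1,\dots,B_k$, a $\mathcal{B}$-partition of $G$ is a $k$-tuple $(\hat B_1,\dots,\hat B_k)$ of pairwise vertex-disjoint induced subdigraphs of $G$ whose vertex sets together cover $V(G)$, such that $\hat B_i$ is an (induced) subdigraph of $B_i$ for each $i=1,\dots,k$; some $\hat B_i$ may be null graphs. *)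

theory Defs
  imports "HOL-Library.FuncSet"
begin

text \<open>A digraph is a pair (vertex set, edge set); loops allowed.\<close>
type_synonym 'a dgraph = "'a set \<times> ('a \<times> 'a) set"

definition wf_dgraph :: "'a dgraph \<Rightarrow> bool" where
  "wf_dgraph G \<longleftrightarrow> snd G \<subseteq> fst G \<times> fst G"

definition subdigraph :: "'a dgraph \<Rightarrow> 'a dgraph \<Rightarrow> bool" where
  "subdigraph H G \<longleftrightarrow> fst H \<subseteq> fst G \<and> snd H \<subseteq> snd G \<and> wf_dgraph H"

definition induced_subdigraph :: "'a dgraph \<Rightarrow> 'a dgraph \<Rightarrow> bool" where
  "induced_subdigraph H G \<longleftrightarrow> subdigraph H G \<and>
     (\<forall>u\<in>fst H. \<forall>v\<in>fst H. (u, v) \<in> snd G \<longrightarrow> (u, v) \<in> snd H)"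

definition is_path :: "'a dgraph \<Rightarrow> 'a list \<Rightarrow> bool" where
  "is_path H xs \<longleftrightarrow> xs \<noteq> [] \<and> distinct xs \<and> set xs \<subseteq> fst H \<and>
     (\<forall>i. Suc i < length xs \<longrightarrow>
        (xs ! i, xs ! Suc i) \<in> snd H \<or> (xs ! Suc i, xs ! i) \<in> snd H)"

definition connected_dg :: "'a dgraph \<Rightarrow> bool" where
  "connected_dg H \<longleftrightarrow> (\<forall>u\<in>fst H. \<forall>v\<in>fst H. u \<noteq> v \<longrightarrow>
     (\<exists>xs. is_path H xs \<and> hd xs = u \<and> last xs = v))"

definition components :: "'a dgraph \<Rightarrow> 'a dgraph set" where
  "components H = {C. subdigraph C H \<and> connected_dg C \<and>
     (\<forall>C'. subdigraph C' H \<and> connected_dg C' \<and> subdigraph C C' \<longrightarrow> C' = C)}"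

definition delete_vertex :: "'a \<Rightarrow> 'a dgraph \<Rightarrow> 'a dgraph" where
  "delete_vertex v H = (fst H - {v}, {e \<in> snd H. fst e \<noteq> v \<and> snd e \<noteq> v})"

definition is_cut_vertex :: "'a dgraph \<Rightarrow> 'a \<Rightarrow> bool" where
  "is_cut_vertex H v \<longleftrightarrow> v \<in> fst H \<and>
     card (components (delete_vertex v H)) > card (components H)"

definition cut_vertices :: "'a dgraph \<Rightarrow> 'a set" where
  "cut_vertices H = {v. is_cut_vertex H v}"

definition no_cut_vertex :: "'a dgraph \<Rightarrow> bool" where
  "no_cut_vertex H \<longleftrightarrow> (\<forall>v. \<not> is_cut_vertex H v)"

definition blocks :: "'a dgraph \<Rightarrow> 'a dgraph set" where
  "blocks G = {B. subdigraph B G \<and> connected_dg B \<and> no_cut_vertex B \<and>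
     (\<forall>B'. subdigraph B' G \<and> connected_dg B' \<and> no_cut_vertex B' \<and> subdigraph B B'
        \<longrightarrow> B' = B)}"

definition cut_index :: "'a dgraph \<Rightarrow> 'a \<Rightarrow> nat" where
  "cut_index G v = card {B \<in> blocks G. v \<in> fst B}"

text \<open>A B-partition, indexed by the blocks (the k-tuple (B1^,...,Bk^) is a function on
  the set of blocks, extensional outside it).\<close>
definition is_B_partition :: "'a dgraph \<Rightarrow> ('a dgraph \<Rightarrow> 'a dgraph) \<Rightarrow> bool" where
  "is_B_partition G P \<longleftrightarrow> P \<in> extensional (blocks G) \<and>
     (\<forall>B\<in>blocks G. induced_subdigraph (P B) G \<and> induced_subdigraph (P B) B) \<and>
     (\<forall>B\<in>blocks G. \<forall>B'\<in>blocks G. B \<noteq> B' \<longrightarrow> fst (P B) \<inter> fst (P B') = {}) \<and>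
     (\<Union>B\<in>blocks G. fst (P B)) = fst G"

end

theory Submission
  imports Defs
begin

definition adj :: "'a dgraph \<Rightarrow> ('a \<times> 'a) set" where
  "adj H = {(a,b). (a,b) \<in> snd H \<or> (b,a) \<in> snd H}"

definition conn :: "'a dgraph \<Rightarrow> bool" where
  "conn H \<longleftrightarrow> (\<forall>u\<in>fst H. \<forall>w\<in>fst H. (u,w) \<in> (adj H)\<^sup>*)"

definition cls :: "'a dgraph \<Rightarrow> 'a \<Rightarrow> 'a dgraph" where
  "cls H x = ({y. (x,y) \<in> (adj H)\<^sup>*},
     {e \<in> snd H. (x, fst e) \<in> (adj H)\<^sup>* \<and> (x, snd e) \<in> (adj H)\<^sup>*})"

lemma sym_adj: "sym (adj H)"
  unfolding adj_def sym_def by auto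

lemma rt_sym: "(a,b) \<in> (adj H)\<^sup>* \<Longrightarrow> (b,a) \<in> (adj H)\<^sup>*"
  by (rule symD[OF sym_rtrancl[OF sym_adj]])

lemma adj_mono: "snd H \<subseteq> snd H' \<Longrightarrow> adj H \<subseteq> adj H'"
  unfolding adj_def by auto

lemma rt_mono: "snd H \<subseteq> snd H' \<Longrightarrow> (a,b) \<in> (adj H)\<^sup>* \<Longrightarrow> (a,b) \<in> (adj H')\<^sup>*"
  using rtrancl_mono[OF adj_mono] by blast

lemma adj_wf: "wf_dgraph H \<Longrightarrow> (a,b) \<in> adj H \<Longrightarrow> a \<in> fst H \<and> b \<in> fst H"
  unfolding adj_def wf_dgraph_def by auto

lemma rt_in: "(a,b) \<in> (adj H)\<^sup>* \<Longrightarrow> wf_dgraph H \<Longrightarrow> a \<in> fst H \<Longrightarrow> b \<in> fst H"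
  by (induction rule: rtrancl_induct) (auto dest: adj_wf)

lemma walk_rt: "(\<forall>m. i \<le> m \<and> m < j \<longrightarrow> (xs!m, xs!Suc m) \<in> r) \<Longrightarrow> i \<le> j \<Longrightarrow> (xs!i, xs!j) \<in> r\<^sup>*"
proof (induction j)
  case 0 then show ?case by simp
next
  case (Suc j)
  show ?case
  proof (cases "i = Suc j")
    case True then show ?thesis by simp
  next
    case False
    then have "i \<le> j" using Suc by simp
    then have "(xs!i, xs!j) \<in> r\<^sup>*" using Suc by simp
    moreover have "(xs!j, xs!Suc j) \<in> r" using Suc \<open>i \<le> j\<close> by simp
    ultimately show ?thesis by simp
  qed
qed

lemma path_rt: "is_path H xs \<Longrightarrow> (hd xs, last xs) \<in> (adj H)\<^sup>*"
proof -
  assume p: "is_path H xs"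
  then have ne: "xs \<noteq> []" unfolding is_path_def by simp
  have "(xs!0, xs!(length xs - 1)) \<in> (adj H)\<^sup>*"
    apply (rule walk_rt)
    using p unfolding is_path_def adj_def by auto
  then show ?thesis using ne by (simp add: hd_conv_nth last_conv_nth)
qed

lemma rt_path: "(u,v) \<in> (adj H)\<^sup>* \<Longrightarrow> wf_dgraph H \<Longrightarrow> u \<in> fst H \<Longrightarrow>
   \<exists>xs. is_path H xs \<and> hd xs = u \<and> last xs = v"
proof (induction rule: rtrancl_induct)
  case base
  then show ?case by (intro exI[of _ "[u]"]) (auto simp: is_path_def)
next
  case (step z w)
  then obtain xs where xs: "is_path H xs" "hd xs = u" "last xs = z" by blast
  have wV: "w \<in> fst H" using adj_wf[OF step.prems(1) step.hyps(2)] by simp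
  show ?case
  proof (cases "w \<in> set xs")
    case True
    then obtain i where i: "i < length xs" "xs!i = w" by (auto simp: in_set_conv_nth)
    let ?ys = "take (Suc i) xs"
    have "is_path H ?ys" using xs(1) i unfolding is_path_def
      by (auto dest: in_set_takeD)
    moreover have "hd ?ys = u" using xs i
      by (metis hd_take is_path_def zero_less_Suc)
    moreover have "last ?ys = w" using i
      by (simp add: take_Suc_conv_app_nth)
    ultimately show ?thesis by blast
  next
    case False
    let ?ys = "xs @ [w]"
    have ne: "xs \<noteq> []" using xs(1) unfolding is_path_def by simp
    have zw: "(z,w) \<in> snd H \<or> (w,z) \<in> snd H" using step.hyps(2) unfolding adj_def by simp
    have "is_path H ?ys"
      unfolding is_path_def
    proof (intro conjI allI impI)
      fix i assume "Suc i < length ?ys"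
      then have "i < length xs" by simp
      show "(?ys ! i, ?ys ! Suc i) \<in> snd H \<or> (?ys ! Suc i, ?ys ! i) \<in> snd H"
      proof (cases "Suc i < length xs")
        case True
        then show ?thesis using xs(1) unfolding is_path_def by (simp add: nth_append)
      next
        case False
        then have "i = length xs - 1" using \<open>i < length xs\<close> by simp
        then show ?thesis using zw xs(3) ne \<open>i < length xs\<close>
          by (simp add: nth_append last_conv_nth)
      qed
    qed (use xs(1) False wV in \<open>auto simp: is_path_def\<close>)
    moreover have "hd ?ys = u" using xs ne by simp
    ultimately show ?thesis by auto
  qed
qed

lemma connected_iff: "wf_dgraph H \<Longrightarrow> connected_dg H \<longleftrightarrow> conn H"
  unfolding connected_dg_def conn_def
  by (metis path_rt rt_path rtrancl.rtrancl_refl)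


lemma wf_del: "wf_dgraph H \<Longrightarrow> wf_dgraph (delete_vertex w H)"
  unfolding wf_dgraph_def delete_vertex_def by auto

lemma fst_del[simp]: "fst (delete_vertex w H) = fst H - {w}"
  unfolding delete_vertex_def by simp

lemma adj_del: "adj (delete_vertex w H) = {(a,b) \<in> adj H. a \<noteq> w \<and> b \<noteq> w}"
  unfolding adj_def delete_vertex_def by auto

lemma del_notin: "wf_dgraph H \<Longrightarrow> w \<notin> fst H \<Longrightarrow> delete_vertex w H = H"
  unfolding wf_dgraph_def delete_vertex_def by (cases H) auto

lemma rt_del: "(a,b) \<in> (adj (delete_vertex w H))\<^sup>* \<Longrightarrow> (a,b) \<in> (adj H)\<^sup>*"
  by (rule rt_mono[of "delete_vertex w H"]) (auto simp: delete_vertex_def)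

lemma rt_cls: "(x,z) \<in> (adj H)\<^sup>* \<Longrightarrow> (x,z) \<in> (adj (cls H x))\<^sup>*"
proof (induction rule: rtrancl_induct)
  case base then show ?case by simp
next
  case (step z z')
  have xz': "(x,z') \<in> (adj H)\<^sup>*" using step.hyps by simp
  have "(z,z') \<in> adj (cls H x)" using step.hyps(1,2) xz'
    unfolding adj_def cls_def by auto
  then show ?case using step.IH by simp
qed

lemma cls_comp: "wf_dgraph H \<Longrightarrow> x \<in> fst H \<Longrightarrow> cls H x \<in> components H"
proof -
  assume wf: "wf_dgraph H" and x: "x \<in> fst H"
  have sub: "subdigraph (cls H x) H"
    unfolding subdigraph_def cls_def wf_dgraph_def using rt_in[OF _ wf x] wf
    by (auto simp: wf_dgraph_def)
  have rts: "(x, fst e) \<in> (adj H)\<^sup>*" "(x, snd e) \<in> (adj H)\<^sup>*" if "e \<in> snd (cls H x)" for e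
    using that unfolding cls_def by auto
  have con: "conn (cls H x)"
    unfolding conn_def
  proof (intro ballI)
    fix u w assume "u \<in> fst (cls H x)" "w \<in> fst (cls H x)"
    then have "(x,u) \<in> (adj H)\<^sup>*" "(x,w) \<in> (adj H)\<^sup>*" unfolding cls_def by auto
    then have "(x,u) \<in> (adj (cls H x))\<^sup>*" "(x,w) \<in> (adj (cls H x))\<^sup>*" by (simp_all add: rt_cls)
    then show "(u,w) \<in> (adj (cls H x))\<^sup>*" using rt_sym by (meson rtrancl_trans)
  qed
  have wfc: "wf_dgraph (cls H x)" using sub unfolding subdigraph_def by simp
  show ?thesis
    unfolding components_def
  proof (intro CollectI conjI allI impI)
    show "subdigraph (cls H x) H" by (rule sub)
    show "connected_dg (cls H x)" using con connected_iff[OF wfc] by simp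
    fix C' assume a: "subdigraph C' H \<and> connected_dg C' \<and> subdigraph (cls H x) C'"
    then have wfC: "wf_dgraph C'" unfolding subdigraph_def by auto
    then have cC: "conn C'" using connected_iff a by blast
    have xC: "x \<in> fst C'" using a unfolding subdigraph_def cls_def by auto
    have v1: "fst C' \<subseteq> fst (cls H x)"
    proof
      fix z assume "z \<in> fst C'"
      then have "(x,z) \<in> (adj C')\<^sup>*" using cC xC unfolding conn_def by auto
      then have "(x,z) \<in> (adj H)\<^sup>*" using rt_mono[of C' H] a unfolding subdigraph_def by auto
      then show "z \<in> fst (cls H x)" unfolding cls_def by simp
    qed
    have e1: "snd C' \<subseteq> snd (cls H x)"
    proof
      fix e assume e: "e \<in> snd C'"
      then have "fst e \<in> fst C'" "snd e \<in> fst C'" using wfC unfolding wf_dgraph_def by auto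
      then have "fst e \<in> fst (cls H x)" "snd e \<in> fst (cls H x)" using v1 by auto
      moreover have "e \<in> snd H" using a e unfolding subdigraph_def by auto
      ultimately show "e \<in> snd (cls H x)" unfolding cls_def by simp
    qed
    show "C' = cls H x" using v1 e1 a unfolding subdigraph_def by (simp add: prod_eq_iff)
  qed
qed

lemma comp_cls: "wf_dgraph H \<Longrightarrow> C \<in> components H \<Longrightarrow> x \<in> fst C \<Longrightarrow> C = cls H x"
proof -
  assume wf: "wf_dgraph H" and C: "C \<in> components H" and x: "x \<in> fst C"
  have sC: "subdigraph C H" and cC: "connected_dg C"
    and mx: "\<And>C'. subdigraph C' H \<Longrightarrow> connected_dg C' \<Longrightarrow> subdigraph C C' \<Longrightarrow> C' = C"
    using C unfolding components_def by auto
  have wfC: "wf_dgraph C" using sC unfolding subdigraph_def by simp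
  have xH: "x \<in> fst H" using sC x unfolding subdigraph_def by auto
  have ccls: "cls H x \<in> components H" by (rule cls_comp[OF wf xH])
  have v1: "fst C \<subseteq> fst (cls H x)"
  proof
    fix z assume "z \<in> fst C"
    then have "(x,z) \<in> (adj C)\<^sup>*" using cC x connected_iff[OF wfC] unfolding conn_def by auto
    then have "(x,z) \<in> (adj H)\<^sup>*" using rt_mono[of C H] sC unfolding subdigraph_def by auto
    then show "z \<in> fst (cls H x)" unfolding cls_def by simp
  qed
  have e1: "snd C \<subseteq> snd (cls H x)"
  proof
    fix e assume e: "e \<in> snd C"
    then have "fst e \<in> fst C" "snd e \<in> fst C" using wfC unfolding wf_dgraph_def by auto
    then have "fst e \<in> fst (cls H x)" "snd e \<in> fst (cls H x)" using v1 by auto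
    moreover have "e \<in> snd H" using sC e unfolding subdigraph_def by auto
    ultimately show "e \<in> snd (cls H x)" unfolding cls_def by simp
  qed
  have "subdigraph C (cls H x)" using v1 e1 wfC unfolding subdigraph_def by simp
  moreover have "subdigraph (cls H x) H" "connected_dg (cls H x)" using ccls unfolding components_def by auto
  ultimately have "cls H x = C" using mx by blast
  then show "C = cls H x" by simp
qed

lemma cls_eq: "(x,y) \<in> (adj H)\<^sup>* \<Longrightarrow> cls H x = cls H y"
proof -
  assume xy: "(x,y) \<in> (adj H)\<^sup>*"
  have yx: "(y,x) \<in> (adj H)\<^sup>*" using rt_sym[OF xy] .
  have "\<And>z. (x,z) \<in> (adj H)\<^sup>* \<longleftrightarrow> (y,z) \<in> (adj H)\<^sup>*"
    using xy yx by (meson rtrancl_trans)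
  then show ?thesis unfolding cls_def by simp
qed

lemma x_in_cls: "x \<in> fst (cls H x)"
  unfolding cls_def by simp

lemma comps_finite: "finite (fst H) \<Longrightarrow> wf_dgraph H \<Longrightarrow> finite (components H)"
proof -
  assume f: "finite (fst H)" and wf: "wf_dgraph H"
  have "finite (snd H)" using wf f unfolding wf_dgraph_def by (meson finite_SigmaI rev_finite_subset)
  then have "finite (Pow (fst H) \<times> Pow (snd H))" using f by simp
  moreover have "components H \<subseteq> Pow (fst H) \<times> Pow (snd H)"
    unfolding components_def subdigraph_def by (auto simp: mem_Times_iff)
  ultimately show ?thesis by (rule rev_finite_subset)
qed

lemma through: "(x,y) \<in> (adj G)\<^sup>* \<Longrightarrow> (x,y) \<notin> (adj (delete_vertex v G))\<^sup>* \<Longrightarrow> (x,v) \<in> (adj G)\<^sup>*"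
proof (induction rule: rtrancl_induct)
  case base then show ?case by simp
next
  case (step z y)
  show ?case
  proof (cases "(x,z) \<in> (adj (delete_vertex v G))\<^sup>*")
    case False then show ?thesis using step.IH by simp
  next
    case xzD: True
    have xzG: "(x,z) \<in> (adj G)\<^sup>*" using xzD by (rule rt_del)
    have xyG: "(x,y) \<in> (adj G)\<^sup>*" using step.hyps(1,2) by (rule rtrancl_into_rtrancl)
    show ?thesis
    proof (cases "z = v")
      case True then show ?thesis using xzG by simp
    next
      case zv: False
      show ?thesis
      proof (cases "y = v")
        case True then show ?thesis using xyG by simp
      next
        case False
        have "(z,y) \<in> adj (delete_vertex v G)" unfolding adj_del using step.hyps(2) zv False by simp
        then have "(x,y) \<in> (adj (delete_vertex v G))\<^sup>*" using xzD by (rule rtrancl_into_rtrancl[rotated])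
        then show ?thesis using step.prems by contradiction
      qed
    qed
  qed
qed

lemma comp_del: "wf_dgraph G \<Longrightarrow> C \<in> components G \<Longrightarrow> v \<notin> fst C \<Longrightarrow> C \<in> components (delete_vertex v G)"
proof -
  assume wf: "wf_dgraph G" and C: "C \<in> components G" and v: "v \<notin> fst C"
  have sC: "subdigraph C G" and cC: "connected_dg C"
    and mx: "\<And>C'. subdigraph C' G \<Longrightarrow> connected_dg C' \<Longrightarrow> subdigraph C C' \<Longrightarrow> C' = C"
    using C unfolding components_def by auto
  have s2: "subdigraph C (delete_vertex v G)"
    using sC v unfolding subdigraph_def delete_vertex_def wf_dgraph_def by auto
  show ?thesis unfolding components_def
  proof (intro CollectI conjI allI impI)
    show "subdigraph C (delete_vertex v G)" by (rule s2)
    show "connected_dg C" by (rule cC)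
    fix C' assume "subdigraph C' (delete_vertex v G) \<and> connected_dg C' \<and> subdigraph C C'"
    moreover then have "subdigraph C' G" unfolding subdigraph_def delete_vertex_def by auto
    ultimately show "C' = C" using mx by blast
  qed
qed

lemma L1:
  assumes wf: "wf_dgraph G" and fin: "finite (fst G)" and nc: "\<not> is_cut_vertex G v"
    and xv: "x \<noteq> v" and yv: "y \<noteq> v" and xy: "(x,y) \<in> (adj G)\<^sup>*" and xG: "x \<in> fst G"
  shows "(x,y) \<in> (adj (delete_vertex v G))\<^sup>*"
proof (rule ccontr)
  assume nxy: "(x,y) \<notin> (adj (delete_vertex v G))\<^sup>*"
  show False
  proof (cases "v \<in> fst G")
    case False
    then show False using nxy xy del_notin[OF wf False] by simp
  next
    case vG: True
    let ?G' = "delete_vertex v G"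
    have wf': "wf_dgraph ?G'" by (rule wf_del[OF wf])
    have fin': "finite (fst ?G')" using fin by simp
    have xv2: "(x,v) \<in> (adj G)\<^sup>*" by (rule through[OF xy nxy])
    have yG: "y \<in> fst G" using rt_in[OF xy wf xG] .
    have xG': "x \<in> fst ?G'" "y \<in> fst ?G'" using xG yG xv yv by auto
    define D where "D = cls ?G' y"
    have D: "D \<in> components ?G'" unfolding D_def by (rule cls_comp[OF wf' xG'(2)])
    define f where "f C = (if v \<in> fst C then cls ?G' x else C)" for C
    have cx: "cls ?G' x \<in> components ?G'" by (rule cls_comp[OF wf' xG'(1)])
    have img: "f ` components G \<subseteq> components ?G' - {D}"
    proof
      fix C' assume "C' \<in> f ` components G"
      then obtain C where C: "C \<in> components G" and C': "C' = f C" by blast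
      show "C' \<in> components ?G' - {D}"
      proof (cases "v \<in> fst C")
        case True
        then have "C' = cls ?G' x" using C' f_def by simp
        moreover have "y \<notin> fst (cls ?G' x)" using nxy unfolding cls_def by simp
        moreover have "y \<in> fst D" unfolding D_def by (rule x_in_cls)
        ultimately show ?thesis using cx by auto
      next
        case False
        then have C'C: "C' = C" using C' f_def by simp
        have "C \<in> components ?G'" by (rule comp_del[OF wf C False])
        moreover have "C \<noteq> D"
        proof
          assume "C = D"
          then have "y \<in> fst C" unfolding D_def using x_in_cls by metis
          then have "C = cls G y" using comp_cls[OF wf C] by simp
          moreover have "(y,v) \<in> (adj G)\<^sup>*" using rt_sym[OF xy] xv2 by (meson rtrancl_trans)
          ultimately have "v \<in> fst C" unfolding cls_def by simp
          then show False using False by simp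
        qed
        ultimately show ?thesis using C'C by simp
      qed
    qed
    have inj: "inj_on f (components G)"
    proof (rule inj_onI)
      fix C1 C2 assume C1: "C1 \<in> components G" and C2: "C2 \<in> components G" and eq: "f C1 = f C2"
      have key: False if A: "A \<in> components G" "v \<in> fst A" and B: "B \<in> components G" "v \<notin> fst B"
        and e: "f A = f B" for A B
      proof -
        have "B = cls ?G' x" using e A B f_def by simp
        then have "x \<in> fst B" using x_in_cls by metis
        then have "B = cls G x" using comp_cls[OF wf B(1)] by simp
        then have "v \<in> fst B" using xv2 unfolding cls_def by simp
        then show False using B by simp
      qed
      show "C1 = C2"
      proof (cases "v \<in> fst C1"; cases "v \<in> fst C2")
        assume "v \<in> fst C1" "v \<in> fst C2"
        then show ?thesis using comp_cls[OF wf C1, of v] comp_cls[OF wf C2, of v] by simp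
      next
        assume "v \<in> fst C1" "v \<notin> fst C2"
        then show ?thesis using key[OF C1 _ C2 _ eq] by simp
      next
        assume "v \<notin> fst C1" "v \<in> fst C2"
        then show ?thesis using key[OF C2 _ C1 _ eq[symmetric]] by simp
      next
        assume "v \<notin> fst C1" "v \<notin> fst C2"
        then show ?thesis using eq f_def by simp
      qed
    qed
    have "card (components G) = card (f ` components G)" using inj by (simp add: card_image)
    also have "\<dots> \<le> card (components ?G' - {D})"
      using img comps_finite[OF fin' wf'] by (simp add: card_mono)
    also have "\<dots> < card (components ?G')"
      using D comps_finite[OF fin' wf'] by (meson card_Diff1_less)
    finally have "is_cut_vertex G v" unfolding is_cut_vertex_def using vG by simp
    then show False using nc by simp
  qed
qed

lemma null_comp: "wf_dgraph H \<Longrightarrow> C \<in> components H \<Longrightarrow> fst C = {} \<Longrightarrow> fst H = {}"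
proof (rule ccontr)
  assume wf: "wf_dgraph H" and C: "C \<in> components H" and e: "fst C = {}" and ne: "fst H \<noteq> {}"
  then obtain x where x: "x \<in> fst H" by blast
  have wfC: "wf_dgraph C" using C unfolding components_def subdigraph_def by simp
  then have "snd C = {}" using e unfolding wf_dgraph_def by simp
  have cx: "cls H x \<in> components H" by (rule cls_comp[OF wf x])
  then have "subdigraph (cls H x) H" "connected_dg (cls H x)" unfolding components_def by auto
  moreover have "subdigraph C (cls H x)" using e \<open>snd C = {}\<close> wfC unfolding subdigraph_def by simp
  ultimately have "cls H x = C" using C unfolding components_def by blast
  then show False using x_in_cls[of x H] e by simp
qed

lemma card_comps_le1:
  assumes wf: "wf_dgraph H" and fin: "finite (fst H)" and c: "conn H"
  shows "card (components H) \<le> 1"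
proof (cases "fst H = {}")
  case True
  have "components H \<subseteq> {({},{})}"
  proof
    fix C assume C: "C \<in> components H"
    then have "fst C = {}" "wf_dgraph C" using True unfolding components_def subdigraph_def by auto
    then show "C \<in> {({},{})}" unfolding wf_dgraph_def by (cases C) auto
  qed
  then have "card (components H) \<le> card {({}::'a set,{}::('a\<times>'a) set)}" by (rule card_mono[rotated]) simp
  then show ?thesis by simp
next
  case False
  then obtain x0 where x0: "x0 \<in> fst H" by blast
  have "components H \<subseteq> {cls H x0}"
  proof
    fix C assume C: "C \<in> components H"
    then obtain z where z: "z \<in> fst C" using null_comp[OF wf C] False by blast
    have "C = cls H z" by (rule comp_cls[OF wf C z])
    moreover have "z \<in> fst H" using C z unfolding components_def subdigraph_def by auto
    then have "(z,x0) \<in> (adj H)\<^sup>*" using c x0 unfolding conn_def by auto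
    ultimately show "C \<in> {cls H x0}" using cls_eq by simp
  qed
  then have "card (components H) \<le> card {cls H x0}" by (rule card_mono[rotated]) simp
  then show ?thesis by simp
qed

lemma card_comps_ge1:
  assumes wf: "wf_dgraph H" and fin: "finite (fst H)" and x: "x \<in> fst H"
  shows "card (components H) \<ge> 1"
proof -
  have "cls H x \<in> components H" by (rule cls_comp[OF wf x])
  then show ?thesis using comps_finite[OF fin wf]
    by (metis One_nat_def Suc_leI card_gt_0_iff empty_iff)
qed

lemma nocut_intro:
  assumes wf: "wf_dgraph H" and fin: "finite (fst H)"
    and d: "\<And>w. w \<in> fst H \<Longrightarrow> conn (delete_vertex w H)"
  shows "no_cut_vertex H"
  unfolding no_cut_vertex_def is_cut_vertex_def
proof (intro allI notI)
  fix w assume a: "w \<in> fst H \<and> card (components H) < card (components (delete_vertex w H))"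
  have "card (components (delete_vertex w H)) \<le> 1"
    using card_comps_le1[OF wf_del[OF wf] _ d] a fin by simp
  moreover have "card (components H) \<ge> 1" using card_comps_ge1[OF wf fin] a by blast
  ultimately show False using a by simp
qed

lemma nocut_del:
  assumes wf: "wf_dgraph H" and fin: "finite (fst H)" and c: "conn H"
    and nc: "no_cut_vertex H"
  shows "conn (delete_vertex w H)"
  unfolding conn_def
proof (intro ballI)
  fix u u' assume "u \<in> fst (delete_vertex w H)" "u' \<in> fst (delete_vertex w H)"
  then have u: "u \<in> fst H" "u \<noteq> w" "u' \<in> fst H" "u' \<noteq> w" by auto
  then have "(u,u') \<in> (adj H)\<^sup>*" using c unfolding conn_def by auto
  then show "(u,u') \<in> (adj (delete_vertex w H))\<^sup>*"
    using L1[OF wf fin _ u(2) u(4) _ u(1)] nc unfolding no_cut_vertex_def by blast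
qed


lemma conn_hub: "(\<And>u. u \<in> fst H \<Longrightarrow> (u,h) \<in> (adj H)\<^sup>*) \<Longrightarrow> conn H"
  unfolding conn_def by (meson rt_sym rtrancl_trans)

lemma connD: "conn H \<Longrightarrow> u \<in> fst H \<Longrightarrow> w \<in> fst H \<Longrightarrow> (u,w) \<in> (adj H)\<^sup>*"
  unfolding conn_def by blast

lemma sub_snd: "subdigraph B G \<Longrightarrow> snd B \<subseteq> snd G"
  unfolding subdigraph_def by blast

lemma sub_fst: "subdigraph B G \<Longrightarrow> fst B \<subseteq> fst G"
  unfolding subdigraph_def by blast

lemma block_props:
  assumes "B \<in> blocks G"
  shows "subdigraph B G" "wf_dgraph B" "conn B" "no_cut_vertex B"
proof -
  show s: "subdigraph B G" and "no_cut_vertex B" using assms unfolding blocks_def by auto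
  show w: "wf_dgraph B" using s unfolding subdigraph_def by simp
  have "connected_dg B" using assms unfolding blocks_def by auto
  then show "conn B" using connected_iff[OF w] by simp
qed

lemma block_max:
  assumes B: "B \<in> blocks G" and s: "subdigraph B' G" and c: "conn B'" and n: "no_cut_vertex B'"
    and sb: "subdigraph B B'"
  shows "B' = B"
proof -
  have "wf_dgraph B'" using s unfolding subdigraph_def by simp
  then have "connected_dg B'" using c connected_iff by blast
  then show ?thesis using B s n sb unfolding blocks_def by blast
qed

lemma snd_del_mono: "snd K \<subseteq> snd U \<Longrightarrow> snd (delete_vertex w K) \<subseteq> snd (delete_vertex w U)"
  unfolding delete_vertex_def by auto

lemma rt_del_mono: "snd K \<subseteq> snd U \<Longrightarrow> (a,b) \<in> (adj (delete_vertex w K))\<^sup>* \<Longrightarrow> (a,b) \<in> (adj (delete_vertex w U))\<^sup>*"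
  by (rule rt_mono[OF snd_del_mono])

lemma block_induced:
  assumes wf: "wf_dgraph G" and fin: "finite (fst G)" and B: "B \<in> blocks G"
  shows "snd B = {e \<in> snd G. fst e \<in> fst B \<and> snd e \<in> fst B}"
proof -
  note bp = block_props[OF B]
  define Bp where "Bp = (fst B, {e \<in> snd G. fst e \<in> fst B \<and> snd e \<in> fst B})"
  have sub1: "snd B \<subseteq> snd Bp" using bp(1,2) unfolding Bp_def subdigraph_def wf_dgraph_def by auto
  have wfp: "wf_dgraph Bp" unfolding Bp_def wf_dgraph_def by auto
  have subp: "subdigraph Bp G" using bp(1) wfp unfolding Bp_def subdigraph_def by auto
  have finB: "finite (fst B)" using bp(1) fin unfolding subdigraph_def by (meson rev_finite_subset)
  have cp: "conn Bp" using bp(3) rt_mono[OF sub1] unfolding conn_def Bp_def by auto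
  have np: "no_cut_vertex Bp"
  proof (rule nocut_intro[OF wfp])
    show "finite (fst Bp)" using finB unfolding Bp_def by simp
    fix w assume "w \<in> fst Bp"
    have "conn (delete_vertex w B)" by (rule nocut_del[OF bp(2) finB bp(3) bp(4)])
    then show "conn (delete_vertex w Bp)"
      using rt_del_mono[OF sub1] unfolding conn_def Bp_def by auto
  qed
  have "subdigraph B Bp" using sub1 bp(2) unfolding subdigraph_def Bp_def by simp
  then have "Bp = B" by (rule block_max[OF B subp cp np])
  then have "snd B = snd Bp" by simp
  also have "snd Bp = {e \<in> snd G. fst e \<in> fst B \<and> snd e \<in> fst B}" unfolding Bp_def by simp
  finally show ?thesis .
qed

lemma block_exists:
  assumes wf: "wf_dgraph G" and fin: "finite (fst G)" and v: "v \<in> fst G"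
  shows "\<exists>B\<in>blocks G. v \<in> fst B"
proof -
  define S where "S = {B. subdigraph B G \<and> conn B \<and> no_cut_vertex B \<and> v \<in> fst B}"
  have finE: "finite (snd G)" using wf fin unfolding wf_dgraph_def by (meson finite_SigmaI rev_finite_subset)
  have "S \<subseteq> Pow (fst G) \<times> Pow (snd G)" unfolding S_def subdigraph_def by (auto simp: mem_Times_iff)
  then have finS: "finite S" using fin finE by (meson finite_Pow_iff finite_SigmaI rev_finite_subset)
  have v0: "({v},{}) \<in> S"
    unfolding S_def
  proof (intro CollectI conjI)
    show "subdigraph ({v}, {}) G" using v unfolding subdigraph_def wf_dgraph_def by simp
    show "conn ({v}, {})" unfolding conn_def by simp
    show "no_cut_vertex ({v}, {})"
      by (rule nocut_intro) (auto simp: wf_dgraph_def conn_def)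
  qed simp
  define m where "m B = card (fst B) + card (snd B)" for B :: "'a dgraph"
  have fm: "finite (m ` S)" using finS by simp
  have nm: "m ` S \<noteq> {}" using v0 by blast
  have "Max (m ` S) \<in> m ` S" using Max_in[OF fm nm] .
  then obtain B where B: "B \<in> S" and BM: "m B = Max (m ` S)" by auto
  have Bm: "m B' \<le> m B" if "B' \<in> S" for B'
    using Max_ge[OF fm] that BM by simp
  have "B \<in> blocks G"
    unfolding blocks_def
  proof (intro CollectI conjI allI impI)
    show "subdigraph B G" "no_cut_vertex B" using B unfolding S_def by auto
    have "wf_dgraph B" "conn B" using B unfolding S_def subdigraph_def by auto
    then show "connected_dg B" using connected_iff[of B] by simp
    fix B' assume a: "subdigraph B' G \<and> connected_dg B' \<and> no_cut_vertex B' \<and> subdigraph B B'"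
    then have "wf_dgraph B'" unfolding subdigraph_def by simp
    then have "conn B'" using a connected_iff[of B'] by simp
    then have B'S: "B' \<in> S" using a B unfolding S_def subdigraph_def by auto
    have f1: "finite (fst B')" "finite (snd B')" using B'S fin finE unfolding S_def subdigraph_def
      by (auto intro: rev_finite_subset)
    have s1: "fst B \<subseteq> fst B'" "snd B \<subseteq> snd B'" using a unfolding subdigraph_def by auto
    have c1: "card (fst B) \<le> card (fst B')" "card (snd B) \<le> card (snd B')"
      using f1 s1 by (auto intro: card_mono)
    have "m B' \<le> m B" using Bm B'S .
    then have "card (fst B) = card (fst B')" "card (snd B) = card (snd B')" using c1 unfolding m_def by auto
    then have "fst B = fst B'" "snd B = snd B'" using f1 s1 card_subset_eq by metis+
    then show "B' = B" by (simp add: prod_eq_iff)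
  qed
  then show ?thesis using B unfolding S_def by auto
qed


lemma walk_del:
  assumes p: "is_path (delete_vertex v G) xs"
    and inc: "\<And>e. e \<in> snd G \<Longrightarrow> fst e \<in> set xs \<Longrightarrow> snd e \<in> set xs \<Longrightarrow> e \<in> snd U"
    and ij: "i \<le> j" "j < length xs"
    and av: "\<And>m. i \<le> m \<Longrightarrow> m \<le> j \<Longrightarrow> xs!m \<noteq> w"
  shows "(xs!i, xs!j) \<in> (adj (delete_vertex w U))\<^sup>*"
proof (rule walk_rt[OF _ ij(1)], intro allI impI)
  fix m assume m: "i \<le> m \<and> m < j"
  then have sm: "Suc m < length xs" using ij by simp
  have e: "(xs!m, xs!Suc m) \<in> snd (delete_vertex v G) \<or> (xs!Suc m, xs!m) \<in> snd (delete_vertex v G)"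
    using p sm unfolding is_path_def by blast
  have inS: "xs!m \<in> set xs" "xs!Suc m \<in> set xs" using sm by auto
  have nw: "xs!m \<noteq> w" "xs!Suc m \<noteq> w" using av m by auto
  have "snd (delete_vertex v G) \<subseteq> snd G" unfolding delete_vertex_def by auto
  then show "(xs!m, xs!Suc m) \<in> adj (delete_vertex w U)"
    using e inS nw inc unfolding adj_def delete_vertex_def by fastforce
qed

lemma block_unique:
  assumes wf: "wf_dgraph G" and fin: "finite (fst G)" and nc: "\<not> is_cut_vertex G v"
    and B1: "B1 \<in> blocks G" and B2: "B2 \<in> blocks G" and v1: "v \<in> fst B1" and v2: "v \<in> fst B2"
  shows "B1 = B2"
proof (rule ccontr)
  assume ne: "B1 \<noteq> B2"
  note p1 = block_props[OF B1] and p2 = block_props[OF B2]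
  have ind1: "snd B1 = {e \<in> snd G. fst e \<in> fst B1 \<and> snd e \<in> fst B1}" by (rule block_induced[OF wf fin B1])
  have ind2: "snd B2 = {e \<in> snd G. fst e \<in> fst B2 \<and> snd e \<in> fst B2}" by (rule block_induced[OF wf fin B2])
  have fB1: "fst B1 \<subseteq> fst G" "fst B2 \<subseteq> fst G" using p1(1) p2(1) unfolding subdigraph_def by auto
  have finB: "finite (fst B1)" "finite (fst B2)" using fB1 fin by (auto intro: rev_finite_subset)
  have nsingle: "fst A \<noteq> {v}" if A: "A \<in> blocks G" "A' \<in> blocks G" "v \<in> fst A'" "A \<noteq> A'" for A A'
  proof
    assume s: "fst A = {v}"
    have "snd A \<subseteq> snd A'" using block_induced[OF wf fin A(1)] block_induced[OF wf fin A(2)] s A(3)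
      by auto
    then have "subdigraph A A'" using s A(3) block_props(2)[OF A(1)] unfolding subdigraph_def by auto
    then have "A' = A" using block_max[OF A(1)] block_props[OF A(2)] by blast
    then show False using A(4) by simp
  qed
  obtain x where x: "x \<in> fst B1" "x \<noteq> v" using nsingle[OF B1 B2 v2 ne] v1 by blast
  obtain y where y: "y \<in> fst B2" "y \<noteq> v" using nsingle[OF B2 B1 v1 ne[symmetric]] v2 by blast
  have "(x,v) \<in> (adj B1)\<^sup>*" by (rule connD[OF p1(3) x(1) v1])
  then have xv: "(x,v) \<in> (adj G)\<^sup>*" by (rule rt_mono[OF sub_snd[OF p1(1)], rotated])
  have "(v,y) \<in> (adj B2)\<^sup>*" by (rule connD[OF p2(3) v2 y(1)])
  then have vy: "(v,y) \<in> (adj G)\<^sup>*" by (rule rt_mono[OF sub_snd[OF p2(1)], rotated])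
  have "(x,y) \<in> (adj (delete_vertex v G))\<^sup>*"
    by (rule L1[OF wf fin nc x(2) y(2)]) (use xv vy fB1 x in auto)
  then obtain xs where xs: "is_path (delete_vertex v G) xs" "hd xs = x" "last xs = y"
    using rt_path[OF _ wf_del[OF wf]] x fB1 by fastforce
  define S where "S = set xs"
  have xsne: "xs \<noteq> []" and dxs: "distinct xs" using xs(1) unfolding is_path_def by auto
  have SG: "S \<subseteq> fst G - {v}" using xs(1) unfolding is_path_def S_def by auto
  have x0: "xs!0 = x" using xs(2) xsne by (simp add: hd_conv_nth)
  have yn: "xs!(length xs - 1) = y" using xs(3) xsne by (simp add: last_conv_nth)
  define U where "U = (fst B1 \<union> fst B2 \<union> S, snd B1 \<union> snd B2 \<union> {e \<in> snd G. fst e \<in> S \<and> snd e \<in> S})"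
  have inc: "\<And>e. e \<in> snd G \<Longrightarrow> fst e \<in> set xs \<Longrightarrow> snd e \<in> set xs \<Longrightarrow> e \<in> snd U"
    unfolding U_def S_def by auto
  have wfU: "wf_dgraph U" using p1(2) p2(2) unfolding U_def wf_dgraph_def by auto
  have subU: "subdigraph U G" using wfU p1(1) p2(1) SG unfolding U_def subdigraph_def by auto
  have finU: "finite (fst U)" using subU fin unfolding subdigraph_def by (auto intro: rev_finite_subset)
  have s1: "snd B1 \<subseteq> snd U" "snd B2 \<subseteq> snd U" unfolding U_def by auto
  have walk: "(xs!j, x) \<in> (adj (delete_vertex w U))\<^sup>* \<or> (xs!j, y) \<in> (adj (delete_vertex w U))\<^sup>*"
    if j: "j < length xs" "xs!j \<noteq> w" for j w
  proof (cases "\<forall>m\<le>j. xs!m \<noteq> w")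
    case True
    then have "(xs!0, xs!j) \<in> (adj (delete_vertex w U))\<^sup>*"
      using walk_del[OF xs(1) inc _ j(1), of 0 w] by simp
    then show ?thesis using x0 rt_sym by metis
  next
    case False
    then obtain k where k: "k \<le> j" "xs!k = w" by auto
    have "k \<noteq> j" using k j by auto
    have av: "xs!m \<noteq> w" if "j \<le> m" "m \<le> length xs - 1" for m
    proof
      assume "xs!m = w"
      then have "xs!m = xs!k" using k by simp
      moreover have "m < length xs" "k < length xs" using that j k by auto
      ultimately have "m = k" using nth_eq_iff_index_eq[OF dxs] by blast
      then show False using that k \<open>k \<noteq> j\<close> by simp
    qed
    have "(xs!j, xs!(length xs - 1)) \<in> (adj (delete_vertex w U))\<^sup>*"
      using walk_del[OF xs(1) inc _ _ av] j by simp
    then show ?thesis using yn by simp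
  qed
  have Sidx: "\<exists>j<length xs. u = xs!j" if "u \<in> S" for u
    using that unfolding S_def by (auto simp: in_set_conv_nth)
  have cU: "conn U"
  proof (rule conn_hub[of U v])
    fix u assume u: "u \<in> fst U"
    have v1U: "(a, v) \<in> (adj U)\<^sup>*" if "a \<in> fst B1" for a
      by (rule rt_mono[OF s1(1) connD[OF p1(3) that v1]])
    have v2U: "(a, v) \<in> (adj U)\<^sup>*" if "a \<in> fst B2" for a
      by (rule rt_mono[OF s1(2) connD[OF p2(3) that v2]])
    consider "u \<in> fst B1" | "u \<in> fst B2" | "u \<in> S" using u unfolding U_def by auto
    then show "(u, v) \<in> (adj U)\<^sup>*"
    proof cases
      case 3
      then obtain j where j: "j < length xs" "u = xs!j" using Sidx by blast
      have vS: "v \<notin> S" using SG by auto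
      have "xs!j \<noteq> v" using j vS unfolding S_def by auto
      then have "(u, x) \<in> (adj (delete_vertex v U))\<^sup>* \<or> (u, y) \<in> (adj (delete_vertex v U))\<^sup>*"
        using walk[OF j(1)] unfolding j(2)[symmetric] by blast
      then have "(u, x) \<in> (adj U)\<^sup>* \<or> (u, y) \<in> (adj U)\<^sup>*" using rt_del[of u x v U] rt_del[of u y v U] by blast
      then show ?thesis using v1U[OF x(1)] v2U[OF y(1)] rtrancl_trans[of u x "adj U" v] rtrancl_trans[of u y "adj U" v] by blast
    qed (use v1U v2U in auto)
  qed
  have nU: "no_cut_vertex U"
  proof (rule nocut_intro[OF wfU finU])
    fix w assume w: "w \<in> fst U"
    have d1: "conn (delete_vertex w B1)" by (rule nocut_del[OF p1(2) finB(1) p1(3) p1(4)])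
    have d2: "conn (delete_vertex w B2)" by (rule nocut_del[OF p2(2) finB(2) p2(3) p2(4)])
    let ?U = "delete_vertex w U"
    have r1: "(a,b) \<in> (adj ?U)\<^sup>*" if "a \<in> fst B1" "b \<in> fst B1" "a \<noteq> w" "b \<noteq> w" for a b
      using d1 that rt_del_mono[OF s1(1)] unfolding conn_def by auto
    have r2: "(a,b) \<in> (adj ?U)\<^sup>*" if "a \<in> fst B2" "b \<in> fst B2" "a \<noteq> w" "b \<noteq> w" for a b
      using d2 that rt_del_mono[OF s1(2)] unfolding conn_def by auto
    have rS: "(a, x) \<in> (adj ?U)\<^sup>* \<or> (a, y) \<in> (adj ?U)\<^sup>*" if "a \<in> S" "a \<noteq> w" for a
      using Sidx[OF that(1)] walk that by blast
    show "conn ?U"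
    proof (cases "w = v")
      case True
      have yx: "(y, x) \<in> (adj ?U)\<^sup>*"
      proof -
        have "y \<in> S" "y \<noteq> w" using y True xs(3) xsne unfolding S_def by auto
        then have "(y, x) \<in> (adj ?U)\<^sup>* \<or> (y, y) \<in> (adj ?U)\<^sup>*" using rS by blast
        moreover have "(xs!(length xs - 1), xs!0) \<in> (adj ?U)\<^sup>*"
        proof -
          have avw: "xs!m \<noteq> w" if "m < length xs" for m
          proof -
            have "xs!m \<in> S" using that unfolding S_def by simp
            then show ?thesis using SG True by blast
          qed
          have "(xs!0, xs!(length xs - 1)) \<in> (adj ?U)\<^sup>*"
          proof (rule walk_del[OF xs(1) inc])
            show "length xs - 1 < length xs" using xsne by simp
            fix m assume "0 \<le> m" "m \<le> length xs - 1"
            show "xs!m \<noteq> w" proof (rule avw)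
              show "m < length xs" using \<open>m \<le> length xs - 1\<close> xsne by (cases xs) auto
            qed
          qed simp_all
          then show ?thesis using rt_sym by metis
        qed
        ultimately show ?thesis using x0 yn by simp
      qed
      show ?thesis
      proof (rule conn_hub[of _ x])
        fix u assume u: "u \<in> fst ?U"
        then have uw: "u \<noteq> w" by simp
        consider "u \<in> fst B1" | "u \<in> fst B2" | "u \<in> S" using u unfolding U_def by auto
        then show "(u, x) \<in> (adj ?U)\<^sup>*"
        proof cases
          case 1 then show ?thesis using r1 x True uw by auto
        next
          case 2 then have "(u, y) \<in> (adj ?U)\<^sup>*" using r2 y True uw by auto
          then show ?thesis using yx by simp
        next
          case 3 then show ?thesis using rS[OF 3 uw] yx by auto
        qed
      qed
    next
      case False
      have wfU': "wf_dgraph ?U" by (rule wf_del[OF wfU])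
      show ?thesis
      proof (rule conn_hub[of _ v])
        fix u assume u: "u \<in> fst ?U"
        then have uw: "u \<noteq> w" by simp
        consider "u \<in> fst B1" | "u \<in> fst B2" | "u \<in> S" using u unfolding U_def by auto
        then show "(u, v) \<in> (adj ?U)\<^sup>*"
        proof cases
          case 1 then show ?thesis using r1 v1 False uw by auto
        next
          case 2 then show ?thesis using r2 v2 False uw by auto
        next
          case 3
          then consider "(u, x) \<in> (adj ?U)\<^sup>*" | "(u, y) \<in> (adj ?U)\<^sup>*" using rS uw by blast
          then show ?thesis
          proof cases
            case 1
            then have "x \<in> fst ?U" using rt_in[OF 1 wfU' u] by simp
            then have "(x, v) \<in> (adj ?U)\<^sup>*" using r1 x v1 False by auto
            then show ?thesis using 1 by simp
          next
            case 2
            then have "y \<in> fst ?U" using rt_in[OF 2 wfU' u] by simp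
            then have "(y, v) \<in> (adj ?U)\<^sup>*" using r2 y v2 False by auto
            then show ?thesis using 2 by simp
          qed
        qed
      qed
    qed
  qed
  have "subdigraph B1 U" using p1(2) unfolding U_def subdigraph_def by auto
  then have UB1: "U = B1" by (rule block_max[OF B1 subU cU nU])
  have "fst B2 \<subseteq> fst U" "snd B2 \<subseteq> snd U" unfolding U_def by auto
  then have "subdigraph B2 B1" using p2(2) UB1 unfolding subdigraph_def by simp
  then have "B1 = B2" using block_max[OF B2] p1 by blast
  then show False using ne by simp
qed


lemma blocks_finite:
  assumes wf: "wf_dgraph G" and fin: "finite (fst G)"
  shows "finite (blocks G)"
proof -
  have finE: "finite (snd G)" using wf fin unfolding wf_dgraph_def by (meson finite_SigmaI rev_finite_subset)
  have "blocks G \<subseteq> Pow (fst G) \<times> Pow (snd G)" unfolding blocks_def subdigraph_def by (auto simp: mem_Times_iff)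
  then show ?thesis using fin finE by (meson finite_Pow_iff finite_SigmaI rev_finite_subset)
qed

theorem mainTheorem1:
  fixes G :: "'a dgraph"
  assumes "finite (fst G)" and "wf_dgraph G"
  shows "card {P. is_B_partition G P} = (\<Prod>v\<in>cut_vertices G. cut_index G v)"
proof -
  note fin = assms(1) and wf = assms(2)
  define V where "V = fst G"
  define Bs where "Bs = blocks G"
  define A where "A = PiE V (\<lambda>v. {B \<in> Bs. v \<in> fst B})"
  define Psi where "Psi f = (\<lambda>B\<in>Bs. ({v \<in> V. f v = B}, {e \<in> snd G. f (fst e) = B \<and> f (snd e) = B}))"
    for f :: "'a \<Rightarrow> 'a dgraph"
  have wfG: "fst e \<in> V \<and> snd e \<in> V" if "e \<in> snd G" for e
    using wf that unfolding wf_dgraph_def V_def by auto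
  have inj: "inj_on Psi A"
  proof (rule inj_onI)
    fix f g assume f: "f \<in> A" and g: "g \<in> A" and eq: "Psi f = Psi g"
    show "f = g"
    proof (rule PiE_ext[OF f[unfolded A_def] g[unfolded A_def]])
      fix v assume v: "v \<in> V"
      have fv: "f v \<in> Bs" using f v unfolding A_def by auto
      have "v \<in> fst (Psi f (f v))" unfolding Psi_def using fv v by simp
      then have "v \<in> fst (Psi g (f v))" using eq by simp
      then show "f v = g v" unfolding Psi_def using fv by simp
    qed
  qed
  have img: "{P. is_B_partition G P} = Psi ` A"
  proof (intro equalityI subsetI)
    fix P assume "P \<in> {P. is_B_partition G P}"
    then have P: "P \<in> extensional Bs"
      "\<And>B. B \<in> Bs \<Longrightarrow> induced_subdigraph (P B) G \<and> induced_subdigraph (P B) B"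
      "\<And>B B'. B \<in> Bs \<Longrightarrow> B' \<in> Bs \<Longrightarrow> B \<noteq> B' \<Longrightarrow> fst (P B) \<inter> fst (P B') = {}"
      "(\<Union>B\<in>Bs. fst (P B)) = V"
      unfolding is_B_partition_def Bs_def V_def by auto
    have ex1: "\<exists>!B. B \<in> Bs \<and> v \<in> fst (P B)" if v: "v \<in> V" for v
    proof -
      obtain B where "B \<in> Bs" "v \<in> fst (P B)" using P(4) v by blast
      moreover have "B' = B" if "B' \<in> Bs" "v \<in> fst (P B')" for B'
        using P(3)[of B B'] that \<open>B \<in> Bs\<close> \<open>v \<in> fst (P B)\<close> by blast
      ultimately show ?thesis by blast
    qed
    define f where "f = (\<lambda>v\<in>V. THE B. B \<in> Bs \<and> v \<in> fst (P B))"
    have fv: "f v \<in> Bs \<and> v \<in> fst (P (f v))" if "v \<in> V" for v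
      using theI'[OF ex1[OF that]] that unfolding f_def by simp
    have funiq: "f v = B" if "v \<in> V" "B \<in> Bs" "v \<in> fst (P B)" for v B
      using ex1[OF that(1)] fv[OF that(1)] that by blast
    have PV: "fst (P B) \<subseteq> V" if "B \<in> Bs" for B
      using P(2)[OF that] unfolding induced_subdigraph_def subdigraph_def V_def by auto
    have PB: "fst (P B) \<subseteq> fst B" if "B \<in> Bs" for B
      using P(2)[OF that] unfolding induced_subdigraph_def subdigraph_def by auto
    have fA: "f \<in> A" unfolding A_def
    proof (rule PiE_I)
      fix v assume v: "v \<in> V"
      have "f v \<in> Bs" "v \<in> fst (P (f v))" using fv[OF v] by auto
      then show "f v \<in> {B \<in> Bs. v \<in> fst B}" using PB[of "f v"] by blast
    next
      fix v assume "v \<notin> V" then show "f v = undefined" unfolding f_def by simp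
    qed
    have "P = Psi f"
    proof (rule extensionalityI[OF P(1)])
      show "Psi f \<in> extensional Bs" unfolding Psi_def by simp
      fix B assume B: "B \<in> Bs"
      have i1: "induced_subdigraph (P B) G" using P(2)[OF B] by simp
      have wfP: "fst e \<in> fst (P B) \<and> snd e \<in> fst (P B)" if "e \<in> snd (P B)" for e
        using i1 that unfolding induced_subdigraph_def subdigraph_def wf_dgraph_def by auto
      have e1: "snd (P B) \<subseteq> snd G" using i1 unfolding induced_subdigraph_def subdigraph_def by auto
      have "fst (P B) = {v \<in> V. f v = B}"
        using PV[OF B] funiq[OF _ B] fv by auto
      moreover have "snd (P B) = {e \<in> snd G. f (fst e) = B \<and> f (snd e) = B}"
      proof (intro equalityI subsetI)
        fix e assume e: "e \<in> snd (P B)"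
        then show "e \<in> {e \<in> snd G. f (fst e) = B \<and> f (snd e) = B}"
          using wfP[OF e] e1 funiq[OF _ B] PV[OF B] by auto
      next
        fix e assume e: "e \<in> {e \<in> snd G. f (fst e) = B \<and> f (snd e) = B}"
        then have ee: "e \<in> snd G" "f (fst e) = B" "f (snd e) = B" by auto
        have "fst e \<in> V" "snd e \<in> V" using wfG[OF ee(1)] by auto
        then have "fst e \<in> fst (P B)" "snd e \<in> fst (P B)" using fv ee by metis+
        then show "e \<in> snd (P B)" using i1 e unfolding induced_subdigraph_def
          by (cases e) auto
      qed
      ultimately show "P B = Psi f B" unfolding Psi_def using B by (simp add: prod_eq_iff)
    qed
    then show "P \<in> Psi ` A" using fA by blast
  next
    fix P assume "P \<in> Psi ` A"
    then obtain f where f: "f \<in> A" and Pf: "P = Psi f" by blast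
    have fv: "f v \<in> Bs" "v \<in> fst (f v)" if "v \<in> V" for v using f that unfolding A_def by auto
    show "P \<in> {P. is_B_partition G P}"
      unfolding is_B_partition_def mem_Collect_eq
    proof (intro conjI ballI impI)
      show "P \<in> extensional (blocks G)" unfolding Pf Psi_def Bs_def by simp
    next
      fix B assume B: "B \<in> blocks G"
      have ind: "snd B = {e \<in> snd G. fst e \<in> fst B \<and> snd e \<in> fst B}"
        by (rule block_induced[OF wf fin B])
      have PB: "P B = ({v \<in> V. f v = B}, {e \<in> snd G. f (fst e) = B \<and> f (snd e) = B})"
        unfolding Pf Psi_def using B Bs_def by simp
      have wfP: "wf_dgraph (P B)" unfolding PB wf_dgraph_def using wfG by auto
      show "induced_subdigraph (P B) G"
        unfolding induced_subdigraph_def subdigraph_def using wfP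
        unfolding PB V_def by auto
      have "fst (P B) \<subseteq> fst B" unfolding PB using fv by auto
      moreover have "snd (P B) \<subseteq> snd B"
      proof
        fix e assume "e \<in> snd (P B)"
        then have ee: "e \<in> snd G" "f (fst e) = B" "f (snd e) = B" unfolding PB by auto
        have "fst e \<in> V" "snd e \<in> V" using wfG[OF ee(1)] by auto
        then have "fst e \<in> fst B" "snd e \<in> fst B" using fv ee by metis+
        then show "e \<in> snd B" unfolding ind using ee by simp
      qed
      moreover have "(u, w) \<in> snd (P B)" if "u \<in> fst (P B)" "w \<in> fst (P B)" "(u, w) \<in> snd B" for u w
        using that ind unfolding PB by auto
      ultimately show "induced_subdigraph (P B) B"
        unfolding induced_subdigraph_def subdigraph_def using wfP by auto
    next
      fix B B' assume "B \<in> blocks G" "B' \<in> blocks G" "B \<noteq> B'"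
      then show "fst (P B) \<inter> fst (P B') = {}" unfolding Pf Psi_def Bs_def by auto
    next
      have "fst (P B) \<subseteq> V" if "B \<in> Bs" for B using that unfolding Pf Psi_def by auto
      moreover have "v \<in> fst (P (f v))" if "v \<in> V" for v
        using fv[OF that] that unfolding Pf Psi_def by simp
      ultimately show "(\<Union>B\<in>blocks G. fst (P B)) = fst G"
        using fv unfolding Bs_def V_def by blast
    qed
  qed
  have "card {P. is_B_partition G P} = card A"
    unfolding img using inj by (rule card_image)
  also have "card A = (\<Prod>v\<in>V. card {B \<in> Bs. v \<in> fst B})"
    unfolding A_def using fin V_def by (simp add: card_PiE)
  also have "\<dots> = (\<Prod>v\<in>V. cut_index G v)"
    unfolding cut_index_def Bs_def by simp
  also have "\<dots> = (\<Prod>v\<in>cut_vertices G. cut_index G v)"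
  proof (rule prod.mono_neutral_right)
    show "finite V" using fin V_def by simp
    show "cut_vertices G \<subseteq> V" unfolding cut_vertices_def is_cut_vertex_def V_def by auto
    show "\<forall>i\<in>V - cut_vertices G. cut_index G i = 1"
    proof
      fix v assume v: "v \<in> V - cut_vertices G"
      then have nc: "\<not> is_cut_vertex G v" and vV: "v \<in> fst G" unfolding cut_vertices_def V_def by auto
      obtain B where B: "B \<in> blocks G" "v \<in> fst B" using block_exists[OF wf fin vV] by blast
      have "{B \<in> blocks G. v \<in> fst B} = {B}"
        using B block_unique[OF wf fin nc] by blast
      then show "cut_index G v = 1" unfolding cut_index_def by simp
    qed
  qed
  finally show ?thesis .
qed

end
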